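(* Let $C>0$ and $\epsilon\in(0,1)$, and let $\phi_C^\epsilon(z):=z+C(1+z)^\epsilon$, where $(\cdot)^\epsilon$ denotes the principal branch of the power function. Then: (1) The map $\phi_C^\epsilon$ is biholomorphic from $H(0)=\{z\in\mathbb{C}:\operatorname{Re}z>0\}$ onto its image. (2) $\operatorname{Re}\phi_C^\epsilon(ir)\sim C\cos\left(\epsilon\frac{\pi}{2}\right)r^\epsilon$ and $\operatorname{Im}\phi_C^\epsilon(ir)\sim r$ as $r\to+\infty$ in $\mathbb{R}$. (3) There exists a continuous function $f_C^\epsilon:[C,+\infty)\to[0,+\infty)$ such that $\operatorname{Im}\phi_C^\epsilon(ir)=f_C^\epsilon(\operatorname{Re}\phi_C^\epsilon(ir))$ for all $r>0$ and $f_C^\epsilon(r)\sim K_C^\epsilon r^{1/\epsilon}$ as $r\to+\infty$, where $K_C^\epsilon:=\left(C\cos\left(\epsilon\frac{\pi}{2}\right)\right)^{-1/\epsilon}$.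
   Context: For real functions (or germs) $f,g$, $f\sim g$ means that $g(x)\neq 0$ for all sufficiently large $x$ and $f(x)/g(x)\to 1$ as $x\to+\infty$. The formula for $\phi_C^\epsilon$ also makes sense on the closed right half-plane (in particular at the points $ir$, $r>0$), and in (2),(3) $\phi_C^\epsilon$ is evaluated there. *)

theory Defs
  imports "HOL-Complex_Analysis.Complex_Analysis" "HOL-Library.Landau_Symbols"
begin

text \<open>phi_C^eps(z) = z + C (1+z)^eps, principal branch (complex powr = exp (eps * Ln (1+z))).\<close>
definition phiCe :: "real \<Rightarrow> real \<Rightarrow> complex \<Rightarrow> complex" where
  "phiCe C eps z = z + complex_of_real C * (1 + z) powr (complex_of_real eps)"

definition rhp :: "complex set" where
  "rhp = {z. Re z > 0}"

end

theory Submission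
  imports Defs
begin

definition GG :: "real \<Rightarrow> real \<Rightarrow> real \<Rightarrow> real" where
  "GG C eps r = C * (1 + r\<^sup>2) powr (eps / 2) * cos (eps * arctan r)"
definition HH :: "real \<Rightarrow> real \<Rightarrow> real \<Rightarrow> real" where
  "HH C eps r = r + C * (1 + r\<^sup>2) powr (eps / 2) * sin (eps * arctan r)"

lemma Ln_1_ir: "Ln (1 + \<i> * of_real r) = of_real (ln (sqrt (1 + r\<^sup>2))) + \<i> * of_real (arctan r)"
proof (rule Ln_unique)
  have p: "sqrt (1 + r\<^sup>2) > 0" by (simp add: add_pos_nonneg)
  show "exp (of_real (ln (sqrt (1 + r\<^sup>2))) + \<i> * of_real (arctan r)) = 1 + \<i> * of_real r"
  proof (rule complex_eqI)
    show "Re (exp (of_real (ln (sqrt (1 + r\<^sup>2))) + \<i> * of_real (arctan r))) = Re (1 + \<i> * of_real r)"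
      using p by (simp add: Re_exp cos_arctan)
    show "Im (exp (of_real (ln (sqrt (1 + r\<^sup>2))) + \<i> * of_real (arctan r))) = Im (1 + \<i> * of_real r)"
      using p by (simp add: Im_exp sin_arctan)
  qed
  show "- pi < Im (of_real (ln (sqrt (1 + r\<^sup>2))) + \<i> * of_real (arctan r))"
    using arctan_bounded[of r] by simp
  show "Im (of_real (ln (sqrt (1 + r\<^sup>2))) + \<i> * of_real (arctan r)) \<le> pi"
    using arctan_bounded[of r] by simp
qed

lemma powr_1_ir: "(1 + \<i> * of_real r) powr (of_real eps) =
   of_real ((1 + r\<^sup>2) powr (eps / 2)) * (of_real (cos (eps * arctan r)) + \<i> * of_real (sin (eps * arctan r)))"
proof -
  have nz: "1 + \<i> * of_real r \<noteq> 0" by (simp add: complex_eq_iff)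
  have p: "1 + r\<^sup>2 > 0" by (simp add: add_pos_nonneg)
  have "(1 + \<i> * of_real r) powr (of_real eps) = exp (of_real eps * Ln (1 + \<i> * of_real r))"
    using nz by (simp add: powr_def)
  also have "\<dots> = exp (of_real (eps * ln (sqrt (1 + r\<^sup>2)))) * exp (\<i> * of_real (eps * arctan r))"
    by (simp add: Ln_1_ir algebra_simps exp_add)
  also have "exp (of_real (eps * ln (sqrt (1 + r\<^sup>2)))) = of_real ((1 + r\<^sup>2) powr (eps / 2))"
    using p by (simp add: powr_def ln_sqrt exp_of_real)
  also have "exp (\<i> * of_real (eps * arctan r)) = of_real (cos (eps * arctan r)) + \<i> * of_real (sin (eps * arctan r))"
    by (simp add: exp_Euler cos_of_real sin_of_real del: of_real_mult flip: of_real_mult)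
  finally show ?thesis .
qed

lemma Re_phi_ir: "Re (phiCe C eps (\<i> * of_real r)) = GG C eps r"
  by (simp add: phiCe_def powr_1_ir GG_def add.commute)
lemma Im_phi_ir: "Im (phiCe C eps (\<i> * of_real r)) = HH C eps r"
  by (simp add: phiCe_def powr_1_ir HH_def add.commute)
lemma inj_pos_re:
  fixes f f' :: "complex \<Rightarrow> complex"
  assumes S: "convex S" and der: "\<And>z. z \<in> S \<Longrightarrow> (f has_field_derivative f' z) (at z)"
    and pos: "\<And>z. z \<in> S \<Longrightarrow> Re (f' z) > 0"
  shows "inj_on f S"
proof (rule inj_onI, rule ccontr)
  fix z w assume z: "z \<in> S" and w: "w \<in> S" and eq: "f z = f w" and ne: "z \<noteq> w"
  define d where "d = z - w"
  have dnz: "d \<noteq> 0" using ne d_def by auto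
  define h where "h t = Re (cnj d * f (w + of_real t * d))" for t :: real
  have inS: "w + of_real t * d \<in> S" if "0 \<le> t" "t \<le> 1" for t
  proof -
    have "w + of_real t * d = (1 - t) *\<^sub>R w + t *\<^sub>R z"
      by (simp add: d_def scaleR_conv_of_real algebra_simps)
    thus ?thesis using convexD_alt[OF S w z] that by auto
  qed
  have "h 0 < h 1"
  proof (rule DERIV_pos_imp_increasing[of 0 1 h])
    fix t :: real assume t: "0 \<le> t" "t \<le> 1"
    let ?p = "w + of_real t * d"
    have d1: "((\<lambda>t. w + of_real t * d) has_derivative (\<lambda>h. of_real h * d)) (at t)"
      by (auto intro!: derivative_eq_intros)
    have d2: "(f has_derivative (\<lambda>h. f' ?p * h)) (at ?p)"
      using der[OF inS[OF t]] by (simp add: has_field_derivative_def)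
    have d3: "((\<lambda>t. f (w + of_real t * d)) has_derivative (\<lambda>h. f' ?p * (of_real h * d))) (at t)"
      using has_derivative_compose[OF d1 d2] by (simp add: o_def)
    have d4: "(h has_derivative (\<lambda>x. Re (cnj d * (f' ?p * (of_real x * d))))) (at t)"
      proof -
      have bl: "bounded_linear (\<lambda>x. Re (cnj d * x))"
        by (intro bounded_linear_compose[OF bounded_linear_Re] bounded_linear_mult_right)
      show ?thesis unfolding h_def using bounded_linear.has_derivative[OF bl d3] .
    qed
    have "(h has_real_derivative (Re (cnj d * d * f' ?p))) (at t)"
      unfolding has_field_derivative_def
    proof (rule has_derivative_eq_rhs[OF d4])
      show "(\<lambda>x. Re (cnj d * (f' ?p * (of_real x * d)))) = (*) (Re (cnj d * d * f' ?p))"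
        by (rule ext) (simp add: algebra_simps)
    qed
    moreover have "Re (cnj d * d * f' ?p) > 0"
    proof -
      have "cnj d * d = of_real ((cmod d)^2)" using complex_norm_square[of d] by (simp add: mult.commute)
      thus ?thesis using pos[OF inS[OF t]] dnz by simp
    qed
    ultimately show "\<exists>y. (h has_real_derivative y) (at t) \<and> y > 0" by blast
  qed simp
  moreover have "w + of_real 1 * d = z" by (simp add: d_def)
  ultimately show False using eq by (simp add: h_def)
qed

lemma phi_deriv:
  assumes "Re z > 0"
  shows "(phiCe C eps has_field_derivative (1 + of_real C * (of_real eps * (1 + z) powr (of_real eps - 1)))) (at z)"
proof -
  have "1 + z \<notin> \<real>\<^sub>\<le>\<^sub>0" using assms by (simp add: complex_nonpos_Reals_iff)
  then show ?thesis unfolding phiCe_def[abs_def]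
    by (auto intro!: derivative_eq_intros)
qed

lemma Re_powr_pos:
  assumes "Re z > 0" "0 < eps" "eps < 1"
  shows "Re ((1 + z) powr (of_real eps - 1)) > 0"
proof -
  have nz: "1 + z \<noteq> 0" using assms by (auto simp: complex_eq_iff)
  have b: "\<bar>Im (Ln (1 + z))\<bar> < pi/2" using assms by (intro Re_Ln_pos_lt_imp) simp
  have "(1 + z) powr (of_real eps - 1) = exp (of_real (eps - 1) * Ln (1 + z))"
    using nz by (simp add: powr_def)
  moreover have "cos ((eps - 1) * Im (Ln (1 + z))) > 0"
  proof (rule cos_gt_zero_pi)
    have "\<bar>(eps - 1) * Im (Ln (1 + z))\<bar> = (1 - eps) * \<bar>Im (Ln (1 + z))\<bar>"
      using assms by (simp add: abs_mult)
    also have "\<dots> \<le> \<bar>Im (Ln (1 + z))\<bar>" using assms by (intro mult_left_le_one_le) auto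
    finally have "\<bar>(eps - 1) * Im (Ln (1 + z))\<bar> < pi/2" using b by linarith
    thus "- (pi / 2) < (eps - 1) * Im (Ln (1 + z))" "(eps - 1) * Im (Ln (1 + z)) < pi / 2" by linarith+
  qed
  ultimately show ?thesis by (simp add: Re_exp)
qed

lemma part1:
  assumes "C > 0" and "0 < eps" and "eps < 1"
  shows "phiCe C eps holomorphic_on rhp \<and> inj_on (phiCe C eps) rhp \<and>
          (\<exists>g. g holomorphic_on (phiCe C eps ` rhp) \<and>
               (\<forall>z\<in>rhp. g (phiCe C eps z) = z) \<and>
               (\<forall>w\<in>phiCe C eps ` rhp. phiCe C eps (g w) = w))"
proof -
  have op: "open rhp" unfolding rhp_def by (simp add: open_halfspace_Re_gt)
  have hol: "phiCe C eps holomorphic_on rhp"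
    using op phi_deriv unfolding rhp_def by (auto simp: holomorphic_on_open)
  have inj: "inj_on (phiCe C eps) rhp"
  proof (rule inj_pos_re)
    show "convex rhp" unfolding rhp_def by (simp add: convex_halfspace_Re_gt)
    show "(phiCe C eps has_field_derivative (1 + of_real C * (of_real eps * (1 + z) powr (of_real eps - 1)))) (at z)"
      if "z \<in> rhp" for z using that phi_deriv unfolding rhp_def by auto
    show "Re (1 + of_real C * (of_real eps * (1 + z) powr (of_real eps - 1))) > 0"
      if "z \<in> rhp" for z
    proof -
      have "Re ((1 + z) powr (of_real eps - 1)) > 0" using that assms Re_powr_pos unfolding rhp_def by auto
      hence "C * (eps * Re ((1 + z) powr (of_real eps - 1))) \<ge> 0" using assms by simp
      thus ?thesis by simp
    qed
  qed
  obtain g where g: "g holomorphic_on (phiCe C eps ` rhp)" "\<And>z. z \<in> rhp \<Longrightarrow> g (phiCe C eps z) = z"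
    using holomorphic_has_inverse[OF hol op inj] by metis
  show ?thesis using hol inj g by fastforce
qed

lemma onepsq[simp]: "1 + x\<^sup>2 \<noteq> (0::real)"
  by (metis add_pos_nonneg less_numeral_extra(1) zero_le_power2 less_irrefl)

lemma GG_deriv:
  "(GG C eps has_real_derivative
     C * eps * (1 + r\<^sup>2) powr (eps / 2 - 1) * (r * cos (eps * arctan r) - sin (eps * arctan r))) (at r)"
proof -
  have p: "1 + r\<^sup>2 > 0" by (simp add: add_pos_nonneg)
  have e: "(1 + r\<^sup>2) powr (eps / 2) = (1 + r\<^sup>2) powr (eps / 2 - 1) * (1 + r\<^sup>2)"
    using p powr_add[of "1+r\<^sup>2" "eps/2-1" 1] by simp
  show ?thesis unfolding GG_def[abs_def]
    apply (rule derivative_eq_intros refl p)+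
    unfolding e using p by (simp add: field_simps power2_eq_square)
qed

lemma GG_deriv_pos:
  assumes "C > 0" "0 < eps" "eps < 1" "r > 0"
  shows "C * eps * (1 + r\<^sup>2) powr (eps / 2 - 1) * (r * cos (eps * arctan r) - sin (eps * arctan r)) > 0"
proof -
  define a where "a = arctan r"
  have a0: "0 < a" "a < pi/2" using assms arctan_bounded[of r] by (auto simp: a_def arctan_less_zero_iff arctan_eq_zero_iff)
  have ca: "cos a > 0" using a0 by (intro cos_gt_zero_pi) auto
  have r: "r = sin a / cos a" using tan_arctan[of r] by (simp add: a_def tan_def)
  have "eps * a < a" using a0 assms by simp
  moreover have "0 < eps * a" using a0 assms by simp
  ultimately have "sin (a - eps * a) > 0"
    using a0 by (intro sin_gt_zero) linarith+
  hence "sin a * cos (eps * a) - cos a * sin (eps * a) > 0" by (simp add: sin_diff)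
  hence "(sin a * cos (eps * a) - cos a * sin (eps * a)) / cos a > 0" using ca by simp
  hence "r * cos (eps * a) - sin (eps * a) > 0" using ca by (simp add: r field_simps)
  hence "r * cos (eps * arctan r) - sin (eps * arctan r) > 0" by (simp add: a_def)
  moreover have "(1 + r\<^sup>2) powr (eps / 2 - 1) > 0" by simp
  ultimately show ?thesis using assms by simp
qed

lemma GG_cont: "continuous_on S (GG C eps)"
  unfolding GG_def[abs_def] by (intro continuous_intros) (auto simp: add_pos_nonneg)

lemma GG_strict:
  assumes "C > 0" "0 < eps" "eps < 1" "0 \<le> x" "x < y"
  shows "GG C eps x < GG C eps y"
proof (rule DERIV_pos_imp_increasing_open[of x y])
  fix z assume z: "x < z" "z < y"
  have zpos: "z > 0" using z assms(4) by linarith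
  show "\<exists>d. (GG C eps has_real_derivative d) (at z) \<and> d > 0"
    by (rule exI, rule conjI, rule GG_deriv, rule GG_deriv_pos[OF assms(1,2,3) zpos])
next
  show "x < y" by (rule assms(5))
next
  show "continuous_on {x..y} (GG C eps)" by (rule GG_cont)
qed

lemma GG_0: "GG C eps 0 = C" by (simp add: GG_def)

lemma my_powr_at_top:
  assumes "(p::real) > 0"
  shows   "filterlim (\<lambda>x. x powr p) at_top at_top"
proof (subst filterlim_cong[OF refl refl])
  show "LIM x at_top. exp (p * ln x) :> at_top"
    by (rule filterlim_compose[OF exp_at_top filterlim_tendsto_pos_mult_at_top[OF tendsto_const]])
       (simp_all add: ln_at_top assms)
  show "eventually (\<lambda>x. x powr p = exp (p * ln x)) at_top"
    using eventually_gt_at_top[of 0] by eventually_elim (simp add: powr_def)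
qed

lemma q_equiv: "(\<lambda>r::real. 1 + r\<^sup>2) \<sim>[at_top] (\<lambda>r. r\<^sup>2)"
proof (rule asymp_equivI')
  have "((\<lambda>r::real. 1 + inverse (r^2)) \<longlongrightarrow> 1 + 0) at_top"
    by (intro tendsto_add tendsto_const tendsto_inverse_0_at_top filterlim_pow_at_top filterlim_ident) auto
  moreover have "eventually (\<lambda>r::real. 1 + inverse (r^2) = (1 + r\<^sup>2) / r\<^sup>2) at_top"
    using eventually_gt_at_top[of 0] by eventually_elim (simp add: field_simps)
  ultimately show "((\<lambda>r::real. (1 + r\<^sup>2) / r\<^sup>2) \<longlongrightarrow> 1) at_top"
    using Lim_transform_eventually by fastforce
qed

lemma rho_equiv:
  assumes "0 < eps"
  shows "(\<lambda>r::real. (1 + r\<^sup>2) powr (eps / 2)) \<sim>[at_top] (\<lambda>r. r powr eps)"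
proof -
  have q: "(\<lambda>r::real. 1 + r\<^sup>2) \<sim>[at_top] (\<lambda>r. r\<^sup>2)" by (rule q_equiv)
  have "(\<lambda>r::real. (1 + r\<^sup>2) powr (eps / 2)) \<sim>[at_top] (\<lambda>r. (r\<^sup>2) powr (eps / 2))"
    by (rule asymp_equiv_powr_real[OF q]) auto
  moreover have "eventually (\<lambda>r::real. (r\<^sup>2) powr (eps / 2) = r powr eps) at_top"
    using eventually_gt_at_top[of 0]
  proof eventually_elim
    case (elim r)
    have "r\<^sup>2 = r powr real 2" using elim by (simp add: powr_realpow)
    thus ?case by (simp add: powr_powr)
  qed
  ultimately show ?thesis
    using asymp_equiv_cong[of "\<lambda>r. (1 + r\<^sup>2) powr (eps / 2)" "\<lambda>r. (1 + r\<^sup>2) powr (eps / 2)" at_top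
      "\<lambda>r. (r\<^sup>2) powr (eps / 2)" "\<lambda>r. r powr eps"] by simp
qed

lemma rho_div:
  assumes "0 < eps" "eps < 1"
  shows "((\<lambda>r::real. (1 + r\<^sup>2) powr (eps / 2) / r) \<longlongrightarrow> 0) at_top"
proof -
  have e: "(\<lambda>r::real. (1 + r\<^sup>2) powr (eps / 2) / r) \<sim>[at_top] (\<lambda>r. r powr eps / r)"
    by (rule asymp_equiv_divide[OF rho_equiv[OF assms(1)] asymp_equiv_refl])
  have "((\<lambda>r::real. r powr (eps - 1)) \<longlongrightarrow> 0) at_top"
    using assms by (intro tendsto_neg_powr filterlim_ident) auto
  moreover have "eventually (\<lambda>r::real. r powr (eps - 1) = r powr eps / r) at_top"
    using eventually_gt_at_top[of 0] by eventually_elim (simp add: powr_diff)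
  ultimately have "((\<lambda>r::real. r powr eps / r) \<longlongrightarrow> 0) at_top"
    by (rule Lim_transform_eventually)
  thus ?thesis using asymp_equiv_tendsto_transfer[OF asymp_equiv_symI[OF e]] by blast
qed

lemma GG_equiv:
  assumes "C > 0" "0 < eps" "eps < 1"
  shows "GG C eps \<sim>[at_top] (\<lambda>r. C * cos (eps * pi / 2) * r powr eps)"
proof -
  have "eps * pi / 2 < 1 * pi / 2" using assms by (intro divide_strict_right_mono mult_strict_right_mono) auto
  moreover have "0 < eps * pi / 2" using assms by simp
  ultimately have cpos: "cos (eps * pi / 2) > 0" using pi_gt_zero by (intro cos_gt_zero_pi) linarith+
  have a: "(\<lambda>r. C * cos (eps * arctan r)) \<sim>[at_top] (\<lambda>_. C * cos (eps * pi / 2))"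
  proof (rule tendsto_imp_asymp_equiv_const)
    have t: "((\<lambda>r. eps * arctan r) \<longlongrightarrow> eps * pi / 2) at_top"
      using tendsto_mult[OF tendsto_const tendsto_arctan_at_top, of eps] by simp
    show "((\<lambda>r. C * cos (eps * arctan r)) \<longlongrightarrow> C * cos (eps * pi / 2)) at_top"
      by (intro tendsto_intros t)
  qed (use assms cpos in auto)
  have b: "(\<lambda>r::real. (1 + r\<^sup>2) powr (eps / 2)) \<sim>[at_top] (\<lambda>r. r powr eps)"
    using rho_equiv assms by blast
  have "GG C eps = (\<lambda>r. C * cos (eps * arctan r) * (1 + r\<^sup>2) powr (eps / 2))"
    by (auto simp: GG_def fun_eq_iff)
  thus ?thesis using asymp_equiv_mult[OF a b] by simp
qed

lemma HH_equiv:
  assumes "C > 0" "0 < eps" "eps < 1"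
  shows "HH C eps \<sim>[at_top] (\<lambda>r. r)"
proof (rule asymp_equivI')
  have l: "((\<lambda>r::real. (1 + r\<^sup>2) powr (eps / 2) / r) \<longlongrightarrow> 0) at_top"
    using rho_div assms by blast
  have "((\<lambda>r. 1 + C * sin (eps * arctan r) * ((1 + r\<^sup>2) powr (eps / 2) / r)) \<longlongrightarrow> 1 + C * sin (eps * (pi/2)) * 0) at_top"
    by (intro tendsto_intros tendsto_arctan_at_top l)
  hence "((\<lambda>r. 1 + C * sin (eps * arctan r) * ((1 + r\<^sup>2) powr (eps / 2) / r)) \<longlongrightarrow> 1) at_top" by simp
  moreover have "eventually (\<lambda>r. 1 + C * sin (eps * arctan r) * ((1 + r\<^sup>2) powr (eps / 2) / r) = HH C eps r / r) at_top"
    using eventually_gt_at_top[of 0] by eventually_elim (auto simp: HH_def add_divide_distrib mult_ac times_divide_eq_right)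
  ultimately show "((\<lambda>r. HH C eps r / r) \<longlongrightarrow> 1) at_top" by (rule Lim_transform_eventually)
qed

lemma HH_nonneg:
  assumes "C > 0" "0 < eps" "eps < 1" "r \<ge> 0"
  shows "HH C eps r \<ge> 0"
proof -
  have "0 \<le> arctan r" "arctan r < pi/2" using assms arctan_bounded[of r] by (auto simp: arctan_less_zero_iff)
  moreover have "eps * arctan r \<le> 1 * arctan r" using assms \<open>0 \<le> arctan r\<close> by (intro mult_right_mono) auto
  ultimately have "0 \<le> eps * arctan r" "eps * arctan r \<le> pi" using assms pi_gt_zero by (simp, linarith)
  hence "sin (eps * arctan r) \<ge> 0" by (intro sin_ge_zero)
  thus ?thesis using assms by (simp add: HH_def)
qed

lemma part3:
  assumes "C > 0" and "0 < eps" and "eps < 1"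
  shows "\<exists>f :: real \<Rightarrow> real.
          continuous_on {C..} f \<and> f ` {C..} \<subseteq> {0..} \<and>
          (\<forall>r>0. HH C eps r = f (GG C eps r)) \<and>
          f \<sim>[at_top] (\<lambda>r. (C * cos (eps * pi / 2)) powr (-1 / eps) * r powr (1 / eps))"
proof -
  define K where "K = C * cos (eps * pi / 2)"
  have "eps * pi / 2 < 1 * pi / 2" using assms by (intro divide_strict_right_mono mult_strict_right_mono) auto
  moreover have "0 < eps * pi / 2" using assms by simp
  ultimately have cpos: "cos (eps * pi / 2) > 0" using pi_gt_zero by (intro cos_gt_zero_pi) linarith+
  hence Kpos: "K > 0" using assms by (simp add: K_def)
  define Ge where "Ge r = GG C eps (max r 0) + min r 0" for r
  have Ge_pos: "Ge r = GG C eps r" if "r \<ge> 0" for r using that by (simp add: Ge_def)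
  have smono: "Ge x < Ge y" if "x < y" for x y
  proof (cases "0 \<le> x")
    case True thus ?thesis using that GG_strict[OF assms True that] by (simp add: Ge_def)
  next
    case False
    have "GG C eps (max x 0) \<le> GG C eps (max y 0)"
    proof (cases "y \<le> 0")
      case False thus ?thesis using \<open>\<not> 0 \<le> x\<close> GG_strict[OF assms, of 0 y] by simp
    qed (use \<open>\<not> 0 \<le> x\<close> in simp)
    moreover have "min x 0 < min y 0" using False that by simp
    ultimately show ?thesis unfolding Ge_def by linarith
  qed
  have inj: "inj Ge"
  proof (rule injI, rule ccontr)
    fix x y assume "Ge x = Ge y" "x \<noteq> y"
    then show False using smono[of x y] smono[of y x] by (cases "x < y") auto
  qed
  define ue where "ue = inv Ge"
  have ue_Ge: "ue (Ge x) = x" for x by (simp add: ue_def inv_f_f[OF inj])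
  have Gecont: "continuous_on UNIV Ge"
    unfolding Ge_def by (intro continuous_intros continuous_on_compose2[OF GG_cont[of UNIV]]) auto
  have ue_cont: "isCont ue (Ge x)" for x
    by (rule isCont_inverse_function2[of "x - 1" x "x + 1"])
       (use Gecont ue_Ge in \<open>auto simp: continuous_on_eq_continuous_at\<close>)
  have GGtop: "filterlim (GG C eps) at_top at_top"
  proof (rule asymp_equiv_at_top_transfer[OF asymp_equiv_symI[OF GG_equiv[OF assms]]])
    have "filterlim (\<lambda>r::real. r powr eps) at_top at_top" by (rule my_powr_at_top[OF assms(2)])
    thus "filterlim (\<lambda>r. C * cos (eps * pi / 2) * r powr eps) at_top at_top"
      using Kpos unfolding K_def by (intro filterlim_tendsto_pos_mult_at_top[OF tendsto_const]) auto
  qed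
  have surj: "\<exists>r\<ge>0. GG C eps r = s" if "s \<ge> C" for s
  proof -
    obtain R where R: "\<And>r. r \<ge> R \<Longrightarrow> GG C eps r \<ge> s"
      using GGtop unfolding filterlim_at_top eventually_at_top_linorder by blast
    have "GG C eps 0 \<le> s" "s \<le> GG C eps (max R 0)" using that R[of "max R 0"] by (auto simp: GG_0)
    from IVT'[of "GG C eps" 0 s "max R 0", OF this] GG_cont show ?thesis by auto
  qed
  have ue_s: "ue s \<ge> 0 \<and> GG C eps (ue s) = s" if sC: "s \<ge> C" for s
  proof -
    obtain r where "r \<ge> 0" "GG C eps r = s" using surj[OF sC] by blast
    hence "ue s = r" using ue_Ge[of r] Ge_pos[of r] by simp
    thus ?thesis using \<open>r \<ge> 0\<close> \<open>GG C eps r = s\<close> by simp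
  qed
  define f where "f s = HH C eps (ue s)" for s
  have fcont: "continuous_on {C..} f"
  proof (intro continuous_at_imp_continuous_on ballI)
    fix s assume "s \<in> {C..}"
    then obtain r where r: "r \<ge> 0" "GG C eps r = s" using surj by auto
    hence s: "s = Ge r" using Ge_pos by simp
    have "isCont (HH C eps) (ue s)"
      unfolding HH_def[abs_def] by (intro continuous_intros) auto
    moreover have "isCont ue s" using ue_cont[of r] s by simp
    ultimately show "isCont f s" unfolding f_def[abs_def] by (rule isCont_o2[rotated])
  qed
  have fpos: "f ` {C..} \<subseteq> {0..}"
  proof
    fix y assume "y \<in> f ` {C..}"
    then obtain s where "s \<ge> C" "y = f s" by auto
    thus "y \<in> {0..}" using ue_s[of s] HH_nonneg[OF assms, of "ue s"] by (simp add: f_def)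
  qed
  have fid: "\<forall>r>0. HH C eps r = f (GG C eps r)"
  proof (intro allI impI)
    fix r :: real assume "r > 0"
    hence "GG C eps r = Ge r" using Ge_pos by simp
    thus "HH C eps r = f (GG C eps r)" by (simp add: f_def ue_Ge)
  qed
  have ue_top: "filterlim ue at_top at_top"
    unfolding filterlim_at_top
  proof
    fix Z
    show "eventually (\<lambda>s. Z \<le> ue s) at_top"
      using eventually_ge_at_top[of "max C (Ge Z)"]
    proof eventually_elim
      case (elim s)
      hence "Ge (ue s) = s" using ue_s[of s] Ge_pos by auto
      thus ?case using elim smono[of "ue s" Z] by (cases "ue s < Z") auto
    qed
  qed
  have ev: "eventually (\<lambda>s. ue s \<ge> 0 \<and> GG C eps (ue s) = s) at_top"
    using eventually_ge_at_top[of C] by eventually_elim (use ue_s in auto)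
  have e1: "(\<lambda>s. GG C eps (ue s)) \<sim>[at_top] (\<lambda>s. K * ue s powr eps)"
    using asymp_equiv_compose'[OF GG_equiv[OF assms] ue_top] by (simp add: K_def)
  have e2: "(\<lambda>s. K * ue s powr eps) \<sim>[at_top] (\<lambda>s. s)"
  proof -
    have "eventually (\<lambda>s. GG C eps (ue s) = s) at_top" using ev by (rule eventually_mono) auto
    thus ?thesis using asymp_equiv_symI[OF e1]
      asymp_equiv_cong[of "\<lambda>s. K * ue s powr eps" "\<lambda>s. K * ue s powr eps" at_top
        "\<lambda>s. GG C eps (ue s)" "\<lambda>s. s"] by simp
  qed
  have e3: "(\<lambda>s. ue s powr eps) \<sim>[at_top] (\<lambda>s. s / K)"
    using asymp_equiv_divide[OF e2 asymp_equiv_refl[of "\<lambda>_. K"]] Kpos by simp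
  have e4: "(\<lambda>s. (ue s powr eps) powr (1 / eps)) \<sim>[at_top] (\<lambda>s. (s / K) powr (1 / eps))"
  proof (rule asymp_equiv_powr_real[OF e3])
    show "eventually (\<lambda>s. 0 \<le> s / K) at_top"
      using eventually_ge_at_top[of 0] by eventually_elim (use Kpos in auto)
  qed auto
  have e5: "ue \<sim>[at_top] (\<lambda>s. K powr (-1 / eps) * s powr (1 / eps))"
  proof -
    have A: "eventually (\<lambda>s. (ue s powr eps) powr (1 / eps) = ue s) at_top"
      using ev by eventually_elim (use assms in \<open>auto simp: powr_powr\<close>)
    have B: "eventually (\<lambda>s. (s / K) powr (1 / eps) = K powr (-1 / eps) * s powr (1 / eps)) at_top"
      using eventually_ge_at_top[of 0]
    proof eventually_elim
      case (elim s)
      have "-1 / eps = - (1 / eps)" by simp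
      thus ?case using elim Kpos by (simp add: powr_divide powr_minus_divide)
    qed
    show ?thesis using e4 asymp_equiv_cong[OF A B] by simp
  qed
  have e6: "f \<sim>[at_top] ue"
    using asymp_equiv_compose'[OF HH_equiv[OF assms] ue_top] by (simp add: f_def[abs_def])
  have "f \<sim>[at_top] (\<lambda>s. K powr (-1 / eps) * s powr (1 / eps))"
    using asymp_equiv_trans[OF e6 e5] .
  thus ?thesis using fcont fpos fid unfolding K_def by blast
qed

theorem lemma3p1:
  fixes C eps :: real
  assumes "C > 0" and "0 < eps" and "eps < 1"
  shows "(phiCe C eps holomorphic_on rhp \<and> inj_on (phiCe C eps) rhp \<and>
          (\<exists>g. g holomorphic_on (phiCe C eps ` rhp) \<and>
               (\<forall>z\<in>rhp. g (phiCe C eps z) = z) \<and>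
               (\<forall>w\<in>phiCe C eps ` rhp. phiCe C eps (g w) = w)))
     \<and> ((\<lambda>r. Re (phiCe C eps (\<i> * complex_of_real r)))
           \<sim>[at_top] (\<lambda>r. C * cos (eps * pi / 2) * r powr eps))
     \<and> ((\<lambda>r. Im (phiCe C eps (\<i> * complex_of_real r))) \<sim>[at_top] (\<lambda>r. r))
     \<and> (\<exists>f :: real \<Rightarrow> real.
          continuous_on {C..} f \<and> f ` {C..} \<subseteq> {0..} \<and>
          (\<forall>r>0. Im (phiCe C eps (\<i> * complex_of_real r))
                 = f (Re (phiCe C eps (\<i> * complex_of_real r)))) \<and>
          f \<sim>[at_top] (\<lambda>r. (C * cos (eps * pi / 2)) powr (-1 / eps) * r powr (1 / eps)))"
proof -
  have ReG: "(\<lambda>r. Re (phiCe C eps (\<i> * complex_of_real r))) = GG C eps"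
    by (simp add: fun_eq_iff Re_phi_ir)
  have ImH: "(\<lambda>r. Im (phiCe C eps (\<i> * complex_of_real r))) = HH C eps"
    by (simp add: fun_eq_iff Im_phi_ir)
  have P1: "phiCe C eps holomorphic_on rhp \<and> inj_on (phiCe C eps) rhp \<and>
          (\<exists>g. g holomorphic_on (phiCe C eps ` rhp) \<and>
               (\<forall>z\<in>rhp. g (phiCe C eps z) = z) \<and>
               (\<forall>w\<in>phiCe C eps ` rhp. phiCe C eps (g w) = w))"
    by (rule part1[OF assms])
  have P2: "(\<lambda>r. Re (phiCe C eps (\<i> * complex_of_real r)))
           \<sim>[at_top] (\<lambda>r. C * cos (eps * pi / 2) * r powr eps)"
    unfolding ReG by (rule GG_equiv[OF assms])
  have P3: "(\<lambda>r. Im (phiCe C eps (\<i> * complex_of_real r))) \<sim>[at_top] (\<lambda>r. r)"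
    unfolding ImH by (rule HH_equiv[OF assms])
  from part3[OF assms] obtain f :: "real \<Rightarrow> real" where
    F: "continuous_on {C..} f \<and> f ` {C..} \<subseteq> {0..} \<and>
        (\<forall>r>0. HH C eps r = f (GG C eps r)) \<and>
        f \<sim>[at_top] (\<lambda>r. (C * cos (eps * pi / 2)) powr (-1 / eps) * r powr (1 / eps))" ..
  have f1: "continuous_on {C..} f" using F by (rule conjunct1)
  have f2: "f ` {C..} \<subseteq> {0..}" using F by (elim conjE)
  have f3: "\<forall>r>0. HH C eps r = f (GG C eps r)" using F by (elim conjE)
  have f4: "f \<sim>[at_top] (\<lambda>r. (C * cos (eps * pi / 2)) powr (-1 / eps) * r powr (1 / eps))"
    using F by (elim conjE)
  have f3': "\<forall>r>0. Im (phiCe C eps (\<i> * complex_of_real r))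
                 = f (Re (phiCe C eps (\<i> * complex_of_real r)))"
    using f3 by (simp only: Re_phi_ir Im_phi_ir)
  have P4: "\<exists>f :: real \<Rightarrow> real.
          continuous_on {C..} f \<and> f ` {C..} \<subseteq> {0..} \<and>
          (\<forall>r>0. Im (phiCe C eps (\<i> * complex_of_real r))
                 = f (Re (phiCe C eps (\<i> * complex_of_real r)))) \<and>
          f \<sim>[at_top] (\<lambda>r. (C * cos (eps * pi / 2)) powr (-1 / eps) * r powr (1 / eps))"
    by (intro exI[of _ f] conjI f1 f2 f3' f4)
  show ?thesis
    by (rule conjI[OF P1 conjI[OF P2 conjI[OF P3 P4]]])
qed

end
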